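(* Let $X$ be a Banach lattice, $S$ a convex $C_0$-semigroup on $X$, $T>0$ and $x_0\in X$. Then there exist $L\ge0$ and $r>0$ such that $\sup_{t\in[0,T]}\|S_x(t)y\|\le L\|y\|$ for all $x\in X$ with $\|x-x_0\|\le r$ and all $y\in X$ with $\|y\|\le r$.
   Context: An operator $T\colon X\to X$ is convex if $T(\lambda x+(1-\lambda)y)\le\lambda Tx+(1-\lambda)Ty$ for all $x,y\in X$, $\lambda\in[0,1]$, and bounded if $\sup_{\|x\|\le r}\|Tx\|<\infty$ for all $r>0$. A convex $C_0$-semigroup is a family $(S(t))_{t\ge0}$ of bounded convex operators $X\to X$ with $S(0)=\mathrm{id}$, $S(t+s)=S(t)S(s)$ for all $s,t\ge0$, and $S(t)x\to x$ as $t\downarrow0$ for all $x$. For $t\ge0$ and $x,y\in X$, $S_x(t)y:=S(t)(x+y)-S(t)x$. *)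

theory Defs
  imports "HOL-Analysis.Analysis"
begin

text \<open>Banach lattice: a real Banach space which is a vector lattice (Riesz space),
  i.e. an ordered real vector space whose order is a lattice, such that the norm
  is a lattice norm: abs x \<le> abs y implies norm x \<le> norm y, where
  abs x = sup x (-x).\<close>
class banach_lattice = banach + ordered_real_vector + lattice +
  assumes lattice_norm: "sup x (- x) \<le> sup y (- y) \<Longrightarrow> norm x \<le> norm y"

definition convex_operator :: "('a::banach_lattice \<Rightarrow> 'a) \<Rightarrow> bool" where
  "convex_operator T \<longleftrightarrow>
     (\<forall>x y. \<forall>l::real. 0 \<le> l \<and> l \<le> 1 \<longrightarrow>
        T (l *\<^sub>R x + (1 - l) *\<^sub>R y) \<le> l *\<^sub>R T x + (1 - l) *\<^sub>R T y)"

definition bounded_operator :: "('a::real_normed_vector \<Rightarrow> 'a) \<Rightarrow> bool" where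
  "bounded_operator T \<longleftrightarrow> (\<forall>r>0. bdd_above ((\<lambda>x. norm (T x)) ` cball 0 r))"

definition convex_C0_semigroup :: "(real \<Rightarrow> 'a::banach_lattice \<Rightarrow> 'a) \<Rightarrow> bool" where
  "convex_C0_semigroup S \<longleftrightarrow>
     (\<forall>t\<ge>0. convex_operator (S t) \<and> bounded_operator (S t)) \<and>
     S 0 = id \<and>
     (\<forall>s\<ge>0. \<forall>t\<ge>0. S (t + s) = S t \<circ> S s) \<and>
     (\<forall>x. ((\<lambda>t. S t x) \<longlongrightarrow> x) (at_right 0))"

definition shifted_semigroup :: "(real \<Rightarrow> 'a::real_normed_vector \<Rightarrow> 'a) \<Rightarrow> 'a \<Rightarrow> real \<Rightarrow> 'a \<Rightarrow> 'a" where
  "shifted_semigroup S x t y = S t (x + y) - S t x"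

end

theory Submission
  imports Defs
begin

lemma bl_abs_nonneg:
  fixes a :: "'a::banach_lattice"
  shows "0 \<le> sup a (- a)"
proof -
  let ?s = "sup a (- a)"
  have "a + - a \<le> ?s + ?s" by (intro add_mono) auto
  then have "0 \<le> ?s + ?s" by simp
  then have "(1/2::real) *\<^sub>R 0 \<le> (1/2::real) *\<^sub>R (?s + ?s)"
    by (intro scaleR_left_mono) auto
  also have "(1/2::real) *\<^sub>R (?s + ?s) = ?s"
    by (metis scaleR_half_double)
  finally show ?thesis by simp
qed

lemma bl_norm_abs:
  fixes a :: "'a::banach_lattice"
  shows "norm (sup a (- a)) \<le> norm a"
proof -
  let ?s = "sup a (- a)"
  have "- ?s \<le> ?s" using bl_abs_nonneg[of a]
    by (meson neg_le_0_iff_le order_trans)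
  then have "sup ?s (- ?s) = ?s" by (simp add: sup_absorb1)
  then show ?thesis by (intro lattice_norm) simp
qed

lemma bl_norm_between:
  fixes l z u :: "'a::banach_lattice"
  assumes "l \<le> z" "z \<le> u"
  shows "norm z \<le> norm l + norm u"
proof -
  define al where "al = sup l (- l)"
  define au where "au = sup u (- u)"
  define w where "w = al + au"
  have al0: "0 \<le> al" and au0: "0 \<le> au" using bl_abs_nonneg al_def au_def by auto
  have "z \<le> w"
  proof -
    have "z \<le> au" using assms(2) au_def by (metis sup_ge1 order_trans)
    also have "au \<le> w" using al0 w_def by (simp add: add_increasing)
    finally show ?thesis .
  qed
  moreover have "- z \<le> w"
  proof -
    have "- z \<le> - l" using assms(1) by simp
    also have "- l \<le> al" using al_def by simp
    also have "al \<le> w" using au0 w_def by (simp add: add_increasing2)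
    finally show ?thesis .
  qed
  ultimately have "sup z (- z) \<le> w" by simp
  moreover have "sup w (- w) = w"
  proof -
    have "0 \<le> w" using al0 au0 w_def by simp
    then have "- w \<le> w" by (meson neg_le_0_iff_le order_trans)
    then show ?thesis by (simp add: sup_absorb1)
  qed
  ultimately have "norm z \<le> norm w" by (intro lattice_norm) simp
  also have "\<dots> \<le> norm al + norm au" unfolding w_def by (rule norm_triangle_ineq)
  also have "\<dots> \<le> norm l + norm u" using bl_norm_abs al_def au_def by (metis add_mono)
  finally show ?thesis .
qed

lemma convex_lip:
  fixes F :: "'a::banach_lattice \<Rightarrow> 'a"
  assumes cv: "convex_operator F" and r: "r > 0"
    and M: "\<forall>z\<in>cball x0 (2*r). norm (F z) \<le> M"
    and x: "norm (x - x0) \<le> r" and y: "norm y \<le> r"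
  shows "norm (F (x + y) - F x) \<le> (4*M/r) * norm y"
proof (cases "y = 0")
  case True
  then show ?thesis by simp
next
  case False
  define lam where "lam = norm y / r"
  have lam0: "0 < lam" and lam1: "lam \<le> 1" using False r y by (auto simp: lam_def)
  define u where "u = (1/lam) *\<^sub>R y"
  have nu: "norm u = r" using lam0 r False by (simp add: u_def lam_def)
  have yu: "y = lam *\<^sub>R u" using lam0 by (simp add: u_def)
  have conv: "\<And>a b l. 0 \<le> l \<Longrightarrow> l \<le> 1 \<Longrightarrow> F (l *\<^sub>R a + (1 - l) *\<^sub>R b) \<le> l *\<^sub>R F a + (1 - l) *\<^sub>R F b"
    using cv unfolding convex_operator_def by blast
  have "F (lam *\<^sub>R (x + u) + (1 - lam) *\<^sub>R x) \<le> lam *\<^sub>R F (x + u) + (1 - lam) *\<^sub>R F x"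
    using conv lam0 lam1 by auto
  moreover have "lam *\<^sub>R (x + u) + (1 - lam) *\<^sub>R x = x + y"
    using yu by (simp add: algebra_simps)
  ultimately have up0: "F (x + y) \<le> lam *\<^sub>R F (x + u) + (1 - lam) *\<^sub>R F x" by simp
  have up: "F (x + y) - F x \<le> lam *\<^sub>R (F (x + u) - F x)"
  proof -
    have "F (x + y) - F x \<le> lam *\<^sub>R F (x + u) + (1 - lam) *\<^sub>R F x - F x"
      using up0 by (rule diff_right_mono)
    also have "\<dots> = lam *\<^sub>R (F (x + u) - F x)" by (simp add: algebra_simps)
    finally show ?thesis .
  qed
  define mu where "mu = 1 / (1 + lam)"
  have mu0: "0 \<le> mu" "mu \<le> 1" using lam0 by (auto simp: mu_def)
  have "F (mu *\<^sub>R (x + y) + (1 - mu) *\<^sub>R (x - u)) \<le> mu *\<^sub>R F (x + y) + (1 - mu) *\<^sub>R F (x - u)"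
    using conv mu0 by auto
  moreover have "mu *\<^sub>R (x + y) + (1 - mu) *\<^sub>R (x - u) = x"
  proof -
    have e1: "1 - mu = lam * mu" using lam0 by (simp add: mu_def field_simps)
    have e2: "mu + lam * mu = 1" using lam0 by (simp add: mu_def field_simps)
    have "mu *\<^sub>R (x + y) + (1 - mu) *\<^sub>R (x - u) = mu *\<^sub>R x + (lam * mu) *\<^sub>R x"
      unfolding e1 yu by (simp add: scaleR_add_right scaleR_diff_right)
    also have "\<dots> = (mu + lam * mu) *\<^sub>R x" by (simp add: scaleR_add_left)
    finally show ?thesis using e2 by simp
  qed
  ultimately have lo0: "F x \<le> mu *\<^sub>R F (x + y) + (1 - mu) *\<^sub>R F (x - u)" by simp
  have lo: "lam *\<^sub>R (F x - F (x - u)) \<le> F (x + y) - F x"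
  proof -
    have "(1 + lam) *\<^sub>R F x \<le> (1 + lam) *\<^sub>R (mu *\<^sub>R F (x + y) + (1 - mu) *\<^sub>R F (x - u))"
      using lo0 lam0 by (intro scaleR_left_mono) auto
    also have "\<dots> = F (x + y) + lam *\<^sub>R F (x - u)"
    proof -
      have "(1 + lam) * mu = 1" "(1 + lam) * (1 - mu) = lam" using lam0 by (auto simp: mu_def field_simps)
      then show ?thesis by (simp add: scaleR_add_right)
    qed
    finally have "(1 + lam) *\<^sub>R F x \<le> F (x + y) + lam *\<^sub>R F (x - u)" .
    then have "(1 + lam) *\<^sub>R F x - F x - lam *\<^sub>R F (x - u) \<le> F (x + y) + lam *\<^sub>R F (x - u) - F x - lam *\<^sub>R F (x - u)"
      by (intro diff_right_mono)
    then show ?thesis by (simp add: algebra_simps)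
  qed
  have inb: "x \<in> cball x0 (2*r)" "x + u \<in> cball x0 (2*r)" "x - u \<in> cball x0 (2*r)"
  proof -
    show "x \<in> cball x0 (2*r)" using x r by (simp add: dist_norm norm_minus_commute)
    have "norm (x + u - x0) \<le> norm (x - x0) + norm u" 
      using norm_triangle_ineq[of "x - x0" u] by (simp add: algebra_simps)
    then show "x + u \<in> cball x0 (2*r)" using x nu by (simp add: dist_norm norm_minus_commute)
    have "norm (x - u - x0) \<le> norm (x - x0) + norm u" 
      using norm_triangle_ineq4[of "x - x0" u] by (simp add: algebra_simps)
    then show "x - u \<in> cball x0 (2*r)" using x nu by (simp add: dist_norm norm_minus_commute)
  qed
  have b1: "norm (lam *\<^sub>R (F x - F (x - u))) \<le> lam * (2*M)"
  proof -
    have "norm (F x - F (x - u)) \<le> norm (F x) + norm (F (x - u))" by (rule norm_triangle_ineq4)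
    also have "\<dots> \<le> 2*M" using M inb(1) inb(3) by (smt (verit))
    finally show ?thesis using lam0 by (simp add: mult_left_mono)
  qed
  have b2: "norm (lam *\<^sub>R (F (x + u) - F x)) \<le> lam * (2*M)"
  proof -
    have "norm (F (x + u) - F x) \<le> norm (F (x + u)) + norm (F x)" by (rule norm_triangle_ineq4)
    also have "\<dots> \<le> 2*M" using M inb(1) inb(2) by (smt (verit))
    finally show ?thesis using lam0 by (simp add: mult_left_mono)
  qed
  have "norm (F (x + y) - F x) \<le> lam * (2*M) + lam * (2*M)"
    using bl_norm_between[OF lo up] b1 b2 by linarith
  also have "\<dots> = (4*M/r) * norm y" using r by (simp add: lam_def field_simps)
  finally show ?thesis .
qed

lemma convex_ubp:
  fixes F :: "'i \<Rightarrow> 'a::banach_lattice \<Rightarrow> 'a" and I :: "'i set"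
  assumes cv: "\<forall>i\<in>I. convex_operator (F i)" and ct: "\<forall>i\<in>I. continuous_on UNIV (F i)"
    and pb: "\<forall>x. \<exists>C. \<forall>i\<in>I. norm (F i x) \<le> C"
  shows "\<exists>r>0. \<exists>M. \<forall>i\<in>I. \<forall>z\<in>cball x0 r. norm (F i z) \<le> M"
proof -
  define A where "A n = {x. \<forall>i\<in>I. norm (F i x) \<le> real n}" for n :: nat
  have clA: "closed (A n)" for n
  proof -
    have "A n = (\<Inter>i\<in>I. {x. norm (F i x) \<le> real n})" by (auto simp: A_def)
    moreover have "closed {x. norm (F i x) \<le> real n}" if "i \<in> I" for i
      using ct that by (intro closed_Collect_le continuous_intros) (auto intro: continuous_on_norm)
    ultimately show ?thesis by auto
  qed
  have UA: "\<Union>(range A) = UNIV"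
  proof (rule set_eqI, rule iffI)
    fix x :: 'a assume "x \<in> \<Union>(range A)" then show "x \<in> UNIV" by simp
  next
    fix x :: 'a assume "x \<in> UNIV"
    obtain C where C: "\<forall>i\<in>I. norm (F i x) \<le> C" using pb by blast
    obtain n :: nat where "C \<le> real n" using real_arch_simple by blast
    then have "x \<in> A n" using C by (auto simp: A_def)
    then show "x \<in> \<Union>(range A)" by blast
  qed
  have "\<exists>n. interior (A n) \<noteq> {}"
  proof (rule ccontr)
    assume "\<not> ?thesis"
    then have "euclidean interior_of \<Union>(range A) = {}"
      by (intro Baire_category_alt) (auto simp: completely_metrizable_space_euclidean clA closed_closedin[symmetric])
    then show False using UA by simp
  qed
  then obtain N z1 where "z1 \<in> interior (A N)" by blast
  then obtain rho where rho: "rho > 0" "ball z1 rho \<subseteq> A N" using mem_interior by blast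
  define w where "w = 2 *\<^sub>R x0 - z1"
  define q where "q = 2 *\<^sub>R z1 - x0"
  obtain Cw where Cw: "\<forall>i\<in>I. norm (F i w) \<le> Cw" using pb by blast
  obtain Cq where Cq: "\<forall>i\<in>I. norm (F i q) \<le> Cq" using pb by blast
  have conv: "\<And>i a b. i \<in> I \<Longrightarrow> F i ((1/2::real) *\<^sub>R a + (1 - 1/2) *\<^sub>R b) \<le> (1/2::real) *\<^sub>R F i a + (1 - 1/2) *\<^sub>R F i b"
  proof -
    fix i a b assume "i \<in> I"
    then have "\<forall>x y. \<forall>l::real. 0 \<le> l \<and> l \<le> 1 \<longrightarrow> F i (l *\<^sub>R x + (1 - l) *\<^sub>R y) \<le> l *\<^sub>R F i x + (1 - l) *\<^sub>R F i y"
      using cv unfolding convex_operator_def by blast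
    then have "0 \<le> (1/2::real) \<and> (1/2::real) \<le> 1 \<longrightarrow> F i ((1/2::real) *\<^sub>R a + (1 - 1/2) *\<^sub>R b) \<le> (1/2::real) *\<^sub>R F i a + (1 - 1/2) *\<^sub>R F i b"
      by blast
    then show "F i ((1/2::real) *\<^sub>R a + (1 - 1/2) *\<^sub>R b) \<le> (1/2::real) *\<^sub>R F i a + (1 - 1/2) *\<^sub>R F i b"
      by linarith
  qed
  show ?thesis
  proof (intro exI conjI ballI)
    show "rho / 4 > 0" using rho by simp
    fix i z assume i: "i \<in> I" and z: "z \<in> cball x0 (rho / 4)"
    have nz: "norm (z - x0) \<le> rho / 4" using z by (simp add: dist_norm norm_minus_commute)
    define p where "p = z1 + (1/2::real) *\<^sub>R (z - x0)"
    define p' where "p' = z1 + 2 *\<^sub>R (z - x0)"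
    have pA: "p \<in> A N"
    proof -
      have "dist z1 p < rho" using nz rho by (simp add: p_def dist_norm)
      then show ?thesis using rho by auto
    qed
    have p'A: "p' \<in> A N"
    proof -
      have "dist z1 p' < rho" using nz rho by (simp add: p'_def dist_norm)
      then show ?thesis using rho by auto
    qed
    have Fp: "norm (F i p) \<le> real N" and Fp': "norm (F i p') \<le> real N" using pA p'A i by (auto simp: A_def)
    have e1: "(1/2::real) *\<^sub>R z + (1 - 1/2) *\<^sub>R q = p"
      by (simp add: p_def q_def algebra_simps)
    have e2: "(1/2::real) *\<^sub>R p' + (1 - 1/2) *\<^sub>R w = z"
      by (simp add: p'_def w_def algebra_simps)
    have up: "F i z \<le> (1/2::real) *\<^sub>R F i p' + (1 - 1/2) *\<^sub>R F i w"
      using conv[OF i, of p' w] e2 by simp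
    have "F i p \<le> (1/2::real) *\<^sub>R F i z + (1 - 1/2) *\<^sub>R F i q"
      using conv[OF i, of z q] e1 by simp
    then have "(2::real) *\<^sub>R F i p \<le> (2::real) *\<^sub>R ((1/2::real) *\<^sub>R F i z + (1 - 1/2) *\<^sub>R F i q)"
      by (intro scaleR_left_mono) auto
    also have "\<dots> = F i z + F i q" by (simp add: scaleR_add_right)
    finally have "(2::real) *\<^sub>R F i p - F i q \<le> F i z + F i q - F i q" by (rule diff_right_mono)
    then have lo: "(2::real) *\<^sub>R F i p - F i q \<le> F i z" by simp
    have "norm (F i z) \<le> norm ((2::real) *\<^sub>R F i p - F i q) + norm ((1/2::real) *\<^sub>R F i p' + (1 - 1/2) *\<^sub>R F i w)"
      by (rule bl_norm_between[OF lo up])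
    also have "\<dots> \<le> (2 * real N + Cq) + (real N / 2 + Cw / 2)"
    proof (rule add_mono)
      have "norm ((2::real) *\<^sub>R F i p - F i q) \<le> norm ((2::real) *\<^sub>R F i p) + norm (F i q)"
        by (rule norm_triangle_ineq4)
      also have "\<dots> \<le> 2 * real N + Cq" using Fp Cq i by fastforce
      finally show "norm ((2::real) *\<^sub>R F i p - F i q) \<le> 2 * real N + Cq" .
      have "norm ((1/2::real) *\<^sub>R F i p' + (1 - 1/2) *\<^sub>R F i w) \<le> norm ((1/2::real) *\<^sub>R F i p') + norm ((1 - 1/2::real) *\<^sub>R F i w)"
        by (rule norm_triangle_ineq)
      also have "\<dots> \<le> real N / 2 + Cw / 2" using Fp' Cw i by fastforce
      finally show "norm ((1/2::real) *\<^sub>R F i p' + (1 - 1/2) *\<^sub>R F i w) \<le> real N / 2 + Cw / 2" .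
    qed
    finally show "norm (F i z) \<le> (2 * real N + Cq) + (real N / 2 + Cw / 2)" .
  qed
qed

lemma sg_comp:
  assumes "convex_C0_semigroup S" "s \<ge> 0" "t \<ge> 0"
  shows "S (t + s) x = S t (S s x)"
  using assms unfolding convex_C0_semigroup_def by (metis comp_apply)

lemma sg_zero:
  assumes "convex_C0_semigroup S"
  shows "S 0 x = x"
  using assms unfolding convex_C0_semigroup_def by simp

lemma sg_small:
  assumes "convex_C0_semigroup S" "e > 0"
  shows "\<exists>b>0. \<forall>t. 0 \<le> t \<and> t < b \<longrightarrow> dist (S t x) x < e"
proof -
  have "((\<lambda>t. S t x) \<longlongrightarrow> x) (at_right 0)" using assms unfolding convex_C0_semigroup_def by blast
  then have "eventually (\<lambda>t. dist (S t x) x < e) (at_right 0)" using assms(2) by (simp add: tendsto_iff)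
  then obtain b where b: "b > 0" "\<forall>y>0. y < b \<longrightarrow> dist (S y x) x < e"
    unfolding eventually_at_right_field by auto
  show ?thesis
  proof (intro exI conjI allI impI)
    show "b > 0" by (rule b)
    fix t assume t: "0 \<le> t \<and> t < b"
    show "dist (S t x) x < e"
    proof (cases "t = 0")
      case True then show ?thesis using sg_zero[OF assms(1)] assms(2) by simp
    next
      case False then show ?thesis using b t by auto
    qed
  qed
qed

lemma sg_cont:
  fixes S :: "real \<Rightarrow> 'a::banach_lattice \<Rightarrow> 'a"
  assumes "convex_C0_semigroup S" "t \<ge> 0"
  shows "continuous_on UNIV (S t)"
proof -
  have cv: "convex_operator (S t)" and bd: "bounded_operator (S t)"
    using assms unfolding convex_C0_semigroup_def by auto
  have "isCont (S t) x" for x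
  proof -
    have "bdd_above ((\<lambda>z. norm (S t z)) ` cball 0 (norm x + 2))"
      using bd unfolding bounded_operator_def by (metis add_nonneg_pos norm_ge_zero zero_less_numeral)
    then obtain M where M0: "\<forall>z\<in>cball 0 (norm x + 2). norm (S t z) \<le> M"
      unfolding bdd_above_def by auto
    have M: "\<forall>z\<in>cball x (2*1). norm (S t z) \<le> M"
    proof
      fix z assume "z \<in> cball x (2*1)"
      then have "norm (z - x) \<le> 2" by (simp add: dist_norm norm_minus_commute)
      then have "norm z \<le> norm x + 2" using norm_triangle_ineq[of x "z - x"] by simp
      then show "norm (S t z) \<le> M" using M0 by simp
    qed
    have lip: "norm (S t (x + y) - S t x) \<le> (4*M/1) * norm y" if "norm y \<le> 1" for y
      by (rule convex_lip[OF cv _ M]) (use that in auto)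
    show ?thesis
      unfolding continuous_at_eps_delta
    proof (intro allI impI)
      fix e :: real assume e: "e > 0"
      define d where "d = min 1 (e / (4 * \<bar>M\<bar> + 1))"
      have d: "d > 0" using e by (simp add: d_def)
      show "\<exists>d>0. \<forall>x'. dist x' x < d \<longrightarrow> dist (S t x') (S t x) < e"
      proof (intro exI conjI allI impI)
        show "d > 0" by (rule d)
        fix x' assume "dist x' x < d"
        then have ny: "norm (x' - x) < d" by (simp add: dist_norm)
        have "norm (S t (x + (x' - x)) - S t x) \<le> (4*M/1) * norm (x' - x)"
          using ny by (intro lip) (simp add: d_def)
        also have "\<dots> \<le> (4*\<bar>M\<bar>) * norm (x' - x)" by (intro mult_right_mono) auto
        also have "\<dots> \<le> (4*\<bar>M\<bar>) * d" using ny by (intro mult_left_mono) auto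
        also have "\<dots> < e"
        proof -
          have "(4*\<bar>M\<bar>) * d \<le> (4*\<bar>M\<bar>) * (e / (4 * \<bar>M\<bar> + 1))" by (intro mult_left_mono) (auto simp: d_def)
          also have "\<dots> < e" using e by (simp add: field_simps)
          finally show ?thesis .
        qed
        finally show "dist (S t x') (S t x) < e" by (simp add: dist_norm)
      qed
    qed
  qed
  then show ?thesis by (simp add: continuous_at_imp_continuous_on)
qed

lemma sg_loc0:
  fixes S :: "real \<Rightarrow> 'a::banach_lattice \<Rightarrow> 'a"
  assumes sg: "convex_C0_semigroup S"
  shows "\<exists>h>0. \<exists>r>0. \<exists>M. \<forall>t\<in>{0..h}. \<forall>z\<in>cball x0 r. norm (S t z) \<le> M"
proof (rule ccontr)
  assume neg: "\<not> ?thesis"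
  have "\<forall>n::nat. \<exists>t z. t \<in> {0..1/(real n+1)} \<and> z \<in> cball x0 (1/(real n+1)) \<and> norm (S t z) > real n"
  proof
    fix n :: nat
    have "\<not> (\<forall>t\<in>{0..1/(real n+1)}. \<forall>z\<in>cball x0 (1/(real n+1)). norm (S t z) \<le> real n)"
      using neg by (metis divide_pos_pos of_nat_add of_nat_0_less_iff zero_less_one add_pos_pos of_nat_1 zero_less_Suc Suc_eq_plus1)
    then show "\<exists>t z. t \<in> {0..1/(real n+1)} \<and> z \<in> cball x0 (1/(real n+1)) \<and> norm (S t z) > real n"
      by (meson not_le)
  qed
  then obtain tt zz where tz: "\<And>n. tt n \<in> {0..1/(real n+1)}" "\<And>n. zz n \<in> cball x0 (1/(real n+1))"
    "\<And>n. norm (S (tt n) (zz n)) > real n"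
    by metis
  have pb: "\<forall>x. \<exists>C. \<forall>n\<in>UNIV. norm (S (tt n) x) \<le> C"
  proof
    fix x
    obtain b where b: "b > 0" "\<forall>t. 0 \<le> t \<and> t < b \<longrightarrow> dist (S t x) x < 1"
      using sg_small[OF sg, of 1 x] by auto
    obtain K :: nat where K: "1 / b \<le> real K" using real_arch_simple by blast
    define C where "C = max (norm x + 1) (Max ((\<lambda>n. norm (S (tt n) x)) ` {..K}))"
    show "\<exists>C. \<forall>n\<in>UNIV. norm (S (tt n) x) \<le> C"
    proof (intro exI ballI)
      fix n :: nat
      show "norm (S (tt n) x) \<le> C"
      proof (cases "n \<le> K")
        case True
        then have "norm (S (tt n) x) \<le> Max ((\<lambda>n. norm (S (tt n) x)) ` {..K})"
          by (intro Max_ge) auto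
        then show ?thesis unfolding C_def by linarith
      next
        case False
        then have "real n + 1 > 1 / b" using K by linarith
        then have "1 < b * (real n + 1)" using b(1) by (simp add: divide_less_eq mult.commute)
        then have "1 / (real n + 1) < b" by (simp add: divide_less_eq mult.commute)
        then have "0 \<le> tt n \<and> tt n < b" using tz(1)[of n] by auto
        then have "dist (S (tt n) x) x < 1" using b by blast
        then have "norm (S (tt n) x) \<le> norm x + 1"
          using norm_triangle_ineq[of "S (tt n) x - x" x] by (simp add: dist_norm)
        then show ?thesis unfolding C_def by linarith
      qed
    qed
  qed
  have cvs: "\<forall>n\<in>UNIV. convex_operator (S (tt n))" and cts: "\<forall>n\<in>UNIV. continuous_on UNIV (S (tt n))"
    using tz(1) sg sg_cont unfolding convex_C0_semigroup_def by auto
  obtain r M where rM: "r > 0" "\<forall>n\<in>UNIV. \<forall>z\<in>cball x0 r. norm (S (tt n) z) \<le> M"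
    using convex_ubp[OF cvs cts pb, of x0] by blast
  obtain n :: nat where n: "max M (1/r) \<le> real n" using real_arch_simple by blast
  have "1 / (real n + 1) < r"
  proof -
    have "1 / r < real n + 1" using n by linarith
    then show ?thesis using rM(1) by (simp add: divide_less_eq mult.commute)
  qed
  then have "zz n \<in> cball x0 r" using tz(2)[of n] by auto
  then have "norm (S (tt n) (zz n)) \<le> M" using rM by blast
  then show False using tz(3)[of n] n by linarith
qed

lemma sg_left0:
  fixes S :: "real \<Rightarrow> 'a::banach_lattice \<Rightarrow> 'a"
  assumes sg: "convex_C0_semigroup S"
  shows "\<exists>h>0. \<forall>\<epsilon>. 0 < \<epsilon> \<and> \<epsilon> \<le> h \<longrightarrow> (\<forall>e>0. \<exists>b. 0 \<le> b \<and> b < \<epsilon> \<and> (\<forall>\<sigma>. b < \<sigma> \<and> \<sigma> < \<epsilon> \<longrightarrow> dist (S \<sigma> x0) (S \<epsilon> x0) < e))"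
proof -
  obtain h r M where hrM: "h > 0" "r > 0" "\<forall>t\<in>{0..h}. \<forall>z\<in>cball x0 r. norm (S t z) \<le> M"
    using sg_loc0[OF sg, of x0] by blast
  define M' where "M' = max M 0"
  have M'0: "M' \<ge> 0" by (simp add: M'_def)
  show ?thesis
  proof (rule exI[of _ h], intro conjI allI impI)
    show "h > 0" by (rule hrM(1))
    fix \<epsilon> e :: real assume eps: "0 < \<epsilon> \<and> \<epsilon> \<le> h" and e: "e > 0"
    define K where "K = 8 * M' / r + 1"
    have K: "K > 0" using M'0 hrM(2) by (simp add: K_def add_nonneg_pos)
    obtain b0 where b0: "b0 > 0" "\<forall>t. 0 \<le> t \<and> t < b0 \<longrightarrow> dist (S t x0) x0 < min (r/2) (e/K)"
      using sg_small[OF sg, of "min (r/2) (e/K)" x0] hrM(2) e K by auto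
    show "\<exists>b. 0 \<le> b \<and> b < \<epsilon> \<and> (\<forall>\<sigma>. b < \<sigma> \<and> \<sigma> < \<epsilon> \<longrightarrow> dist (S \<sigma> x0) (S \<epsilon> x0) < e)"
    proof (intro exI conjI allI impI)
      show "0 \<le> max 0 (\<epsilon> - b0)" by simp
      show "max 0 (\<epsilon> - b0) < \<epsilon>" using eps b0 by simp
      fix \<sigma> assume sig: "max 0 (\<epsilon> - b0) < \<sigma> \<and> \<sigma> < \<epsilon>"
      define \<tau> where "\<tau> = \<epsilon> - \<sigma>"
      have tau: "0 \<le> \<tau>" "\<tau> < b0" using sig by (auto simp: \<tau>_def)
      define y where "y = S \<tau> x0 - x0"
      have ny: "norm y < min (r/2) (e/K)" using b0(2) tau by (simp add: y_def dist_norm)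
      have sigh: "\<sigma> \<in> {0..h}" using sig eps by auto
      have Mb: "\<forall>z\<in>cball x0 (2*(r/2)). norm (S \<sigma> z) \<le> M'"
      proof
        fix z assume "z \<in> cball x0 (2*(r/2))"
        then have "z \<in> cball x0 r" by simp
        then have "norm (S \<sigma> z) \<le> M" using hrM(3) sigh by blast
        then show "norm (S \<sigma> z) \<le> M'" unfolding M'_def by linarith
      qed
      have cv: "convex_operator (S \<sigma>)" using sg sig unfolding convex_C0_semigroup_def by auto
      have "norm (S \<sigma> (x0 + y) - S \<sigma> x0) \<le> (4*M'/(r/2)) * norm y"
        by (rule convex_lip[OF cv _ Mb]) (use hrM(2) ny in auto)
      also have "\<dots> \<le> K * norm y" using M'0 hrM(2) by (intro mult_right_mono) (auto simp: K_def)
      also have "\<dots> < K * (e / K)" using ny K by (intro mult_strict_left_mono) auto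
      also have "\<dots> = e" using K by simp
      finally have "norm (S \<sigma> (x0 + y) - S \<sigma> x0) < e" .
      moreover have "S \<sigma> (x0 + y) = S \<epsilon> x0"
        using sg_comp[OF sg tau(1), of \<sigma> x0] sig by (simp add: y_def \<tau>_def)
      ultimately show "dist (S \<sigma> x0) (S \<epsilon> x0) < e" by (simp add: dist_norm norm_minus_commute)
    qed
  qed
qed

lemma sg_orbit_bdd:
  fixes S :: "real \<Rightarrow> 'a::banach_lattice \<Rightarrow> 'a"
  assumes sg: "convex_C0_semigroup S"
  shows "\<exists>C. \<forall>t\<in>{0..T}. norm (S t x0) \<le> C"
proof -
  obtain h where h: "h > 0" "\<forall>\<epsilon>. 0 < \<epsilon> \<and> \<epsilon> \<le> h \<longrightarrow> (\<forall>e>0. \<exists>b. 0 \<le> b \<and> b < \<epsilon> \<and> (\<forall>\<sigma>. b < \<sigma> \<and> \<sigma> < \<epsilon> \<longrightarrow> dist (S \<sigma> x0) (S \<epsilon> x0) < e))"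
    using sg_left0[OF sg, of x0] by blast
  have "continuous_on {0..T} (\<lambda>t. S t x0)"
    unfolding continuous_on_iff
  proof (intro ballI allI impI)
    fix t e :: real assume t: "t \<in> {0..T}" and e: "e > 0"
    obtain b1 where b1: "b1 > 0" "\<forall>\<tau>. 0 \<le> \<tau> \<and> \<tau> < b1 \<longrightarrow> dist (S \<tau> (S t x0)) (S t x0) < e"
      using sg_small[OF sg e, of "S t x0"] by blast
    have "\<exists>d2>0. \<forall>x'. 0 \<le> x' \<and> x' < t \<and> t - x' < d2 \<longrightarrow> dist (S x' x0) (S t x0) < e"
    proof (cases "t = 0")
      case True then show ?thesis by (intro exI[of _ 1]) auto
    next
      case False
      then have tpos: "t > 0" using t by simp
      define \<epsilon> where "\<epsilon> = min h t"
      define s0 where "s0 = t - \<epsilon>"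
      have eps: "0 < \<epsilon>" "\<epsilon> \<le> h" using h tpos by (auto simp: \<epsilon>_def)
      have s0: "0 \<le> s0" "s0 + \<epsilon> = t" by (auto simp: s0_def \<epsilon>_def)
      have "isCont (S s0) (S \<epsilon> x0)"
        using sg_cont[OF sg s0(1)] by (simp add: continuous_on_eq_continuous_at)
      then obtain d where d: "d > 0" "\<forall>z. dist z (S \<epsilon> x0) < d \<longrightarrow> dist (S s0 z) (S s0 (S \<epsilon> x0)) < e"
        unfolding continuous_at_eps_delta using e by blast
      obtain b where b: "0 \<le> b" "b < \<epsilon>" "\<forall>\<sigma>. b < \<sigma> \<and> \<sigma> < \<epsilon> \<longrightarrow> dist (S \<sigma> x0) (S \<epsilon> x0) < d"
        using h(2) eps d(1) by blast
      have St: "S s0 (S \<epsilon> x0) = S t x0" using sg_comp[OF sg _ s0(1), of \<epsilon> x0] eps s0(2) by (simp add: add.commute)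
      show ?thesis
      proof (intro exI[of _ "\<epsilon> - b"] conjI allI impI)
        show "\<epsilon> - b > 0" using b by simp
        fix x' assume x': "0 \<le> x' \<and> x' < t \<and> t - x' < \<epsilon> - b"
        define \<sigma> where "\<sigma> = x' - s0"
        have sig: "b < \<sigma>" "\<sigma> < \<epsilon>" using x' s0 by (auto simp: \<sigma>_def)
        have "S x' x0 = S s0 (S \<sigma> x0)"
          using sg_comp[OF sg _ s0(1), of \<sigma> x0] sig b by (simp add: \<sigma>_def add.commute)
        then show "dist (S x' x0) (S t x0) < e" using d b sig St by simp
      qed
    qed
    then obtain d2 where d2: "d2 > 0" "\<forall>x'. 0 \<le> x' \<and> x' < t \<and> t - x' < d2 \<longrightarrow> dist (S x' x0) (S t x0) < e"
      by blast
    show "\<exists>d>0. \<forall>x'\<in>{0..T}. dist x' t < d \<longrightarrow> dist (S x' x0) (S t x0) < e"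
    proof (intro exI[of _ "min b1 d2"] conjI ballI impI)
      show "min b1 d2 > 0" using b1 d2 by simp
      fix x' assume x'T: "x' \<in> {0..T}" and dx: "dist x' t < min b1 d2"
      show "dist (S x' x0) (S t x0) < e"
      proof (cases "t \<le> x'")
        case True
        have "S x' x0 = S (x' - t) (S t x0)"
          using sg_comp[OF sg, of t "x' - t" x0] t True by simp
        then show ?thesis using b1(2)[rule_format, of "x' - t"] True dx by (simp add: dist_real_def)
      next
        case False
        then show ?thesis using d2(2)[rule_format, of x'] x'T dx by (simp add: dist_real_def)
      qed
    qed
  qed
  then have "compact ((\<lambda>t. S t x0) ` {0..T})" by (intro compact_continuous_image) auto
  then have "bounded ((\<lambda>t. S t x0) ` {0..T})" by (rule compact_imp_bounded)
  then show ?thesis unfolding bounded_iff by auto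
qed

theorem proposition2p2:
  fixes S :: "real \<Rightarrow> 'a::banach_lattice \<Rightarrow> 'a" and T :: real and x0 :: 'a
  assumes "convex_C0_semigroup S" and "T > 0"
  shows "\<exists>L\<ge>0. \<exists>r>0. \<forall>x y. norm (x - x0) \<le> r \<longrightarrow> norm y \<le> r \<longrightarrow>
           (\<forall>t\<in>{0..T}. norm (shifted_semigroup S x t y) \<le> L * norm y)"
proof -
  note sg = assms(1)
  have cvs: "\<forall>t\<in>{0..T}. convex_operator (S t)" using sg unfolding convex_C0_semigroup_def by auto
  have cts: "\<forall>t\<in>{0..T}. continuous_on UNIV (S t)" using sg_cont[OF sg] by auto
  have pb: "\<forall>x. \<exists>C. \<forall>t\<in>{0..T}. norm (S t x) \<le> C" using sg_orbit_bdd[OF sg] by blast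
  obtain r0 M where rM: "r0 > 0" "\<forall>t\<in>{0..T}. \<forall>z\<in>cball x0 r0. norm (S t z) \<le> M"
    using convex_ubp[OF cvs cts pb, of x0] by blast
  define M' where "M' = max M 0"
  define r where "r = r0 / 2"
  have r: "r > 0" using rM(1) by (simp add: r_def)
  show ?thesis
  proof (rule exI[of _ "4 * M' / r"], rule conjI)
    show "0 \<le> 4 * M' / r" using r by (simp add: M'_def)
    show "\<exists>r'>0. \<forall>(x::'a) (y::'a). norm (x - x0) \<le> r' \<longrightarrow> norm y \<le> r' \<longrightarrow>
           (\<forall>t\<in>{0..T}. norm (shifted_semigroup S x t y) \<le> 4 * M' / r * norm y)"
    proof (rule exI[of _ r], intro conjI allI impI ballI)
    show "r > 0" by (rule r)
    fix x y :: 'a and t :: real assume x: "norm (x - x0) \<le> r" and y: "norm y \<le> r" and t: "t \<in> {0..T}"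
    have Mb: "\<forall>z\<in>cball x0 (2*r). norm (S t z) \<le> M'"
    proof
      fix z assume "z \<in> cball x0 (2*r)"
      then have "z \<in> cball x0 r0" by (simp add: r_def)
      then have "norm (S t z) \<le> M" using rM(2) t by blast
      then show "norm (S t z) \<le> M'" unfolding M'_def by linarith
    qed
    show "norm (shifted_semigroup S x t y) \<le> 4 * M' / r * norm y"
      unfolding shifted_semigroup_def
      using convex_lip[OF _ r Mb x y] cvs t by blast
  qed
  qed
qed

end
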